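(* Let $K$ be a field, $s\ge 2$, and $S=K[t_1,\ldots,t_s]$ with each $t_i$ of degree $1$. Let $\mathcal{L}\subset\mathbb{Z}^s$ be a lattice such that the lattice ideal $I(\mathcal{L})$ is graded (i.e. generated by homogeneous polynomials) and $\dim S/I(\mathcal{L})=1$. Then $$\deg\, S/I(\mathcal{L})=|T(\mathbb{Z}^s/\mathcal{L})|,$$ where $T(\mathbb{Z}^s/\mathcal{L})$ is the torsion subgroup of $\mathbb{Z}^s/\mathcal{L}$.
   Context: A lattice is a subgroup $\mathcal{L}$ of $\mathbb{Z}^s$. For $a\in\mathbb{Z}^s$ write $a=a^+-a^-$ with $a^+,a^-\in\mathbb{N}^s$ of disjoint supports, and $t^c=t_1^{c_1}\cdots t_s^{c_s}$ for $c\in\mathbb{N}^s$. The lattice ideal of $\mathcal{L}$ is $I(\mathcal{L})=(\{t^{a^+}-t^{a^-}: a\in\mathcal{L}\})\subset S$. The torsion subgroup $T(M)$ of an abelian group $M$ is the set of $x\in M$ with $px=0$ for some positive integer $p$. For a graded ideal $I\subset S$, with $S_d$ the homogeneous polynomials of degree $d$ (with $0$) and $I_d=I\cap S_d$, the Hilbert function is $H_I(d)=\dim_K S_d/I_d$; there is a unique polynomial $h_I(t)=c_kt^k+\cdots$ (the Hilbert polynomial, of degree $k$, with $k=-1$ meaning $h_I=0$) with $h_I(d)=H_I(d)$ for $d\gg0$; $\dim S/I=k+1$ (Krull dimension). The degree $\deg S/I$ is $c_k\,k!$ if $k\ge 0$ and $\dim_K(S/I)$ if $k=-1$. *)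

theory Defs
  imports Complex_Main "HOL-Library.Poly_Mapping" "HOL-Computational_Algebra.Polynomial"
begin

text \<open>Polynomial ring S = K[t_i : i in 'n] (the variables are indexed by a finite type 'n,
  so s = CARD('n)); a monomial t^c is an exponent vector c :: 'n =>0 nat.\<close>
type_synonym ('n, 'k) mpoly = "('n \<Rightarrow>\<^sub>0 nat) \<Rightarrow>\<^sub>0 'k"

definition mdeg :: "('n::finite \<Rightarrow>\<^sub>0 nat) \<Rightarrow> nat" where
  "mdeg c = (\<Sum>i\<in>UNIV. Poly_Mapping.lookup c i)"

definition tmon :: "('n::finite \<Rightarrow>\<^sub>0 nat) \<Rightarrow> ('n, 'k::field) mpoly" where
  "tmon c = Poly_Mapping.single c 1"

definition homog_part :: "nat \<Rightarrow> ('n::finite, 'k::field) mpoly set" where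
  "homog_part d = {p. \<forall>m\<in>Poly_Mapping.keys p. mdeg m = d}"

definition ideal_gen :: "('n::finite, 'k::field) mpoly set \<Rightarrow> ('n, 'k) mpoly set" where
  "ideal_gen G = \<Inter>{J. G \<subseteq> J \<and> 0 \<in> J \<and> (\<forall>a\<in>J. \<forall>b\<in>J. a + b \<in> J) \<and> (\<forall>a\<in>J. \<forall>r. r * a \<in> J)}"

definition graded_ideal :: "('n::finite, 'k::field) mpoly set \<Rightarrow> bool" where
  "graded_ideal I \<longleftrightarrow> (\<exists>G. (\<forall>g\<in>G. \<exists>d. g \<in> homog_part d) \<and> I = ideal_gen G)"

definition kscale :: "'k::field \<Rightarrow> ('n, 'k) mpoly \<Rightarrow> ('n, 'k) mpoly" where
  "kscale c p = Poly_Mapping.map (\<lambda>x. c * x) p"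

definition kdim :: "('n::finite, 'k::field) mpoly set \<Rightarrow> nat" where
  "kdim V = vector_space.dim kscale V"

definition hilbert_fun :: "('n::finite, 'k::field) mpoly set \<Rightarrow> nat \<Rightarrow> nat" where
  "hilbert_fun I d = kdim (homog_part d :: ('n, 'k) mpoly set) - kdim (I \<inter> homog_part d)"

definition hilbert_poly :: "('n::finite, 'k::field) mpoly set \<Rightarrow> real poly" where
  "hilbert_poly I = (THE p. \<forall>\<^sub>F d in sequentially. poly p (real d) = real (hilbert_fun I d))"

text \<open>Krull dimension of S/I = k+1 where k = deg h_I (k = -1 iff h_I = 0).\<close>
definition krull_dim_quot :: "('n::finite, 'k::field) mpoly set \<Rightarrow> nat" where
  "krull_dim_quot I = (if hilbert_poly I = 0 then 0 else degree (hilbert_poly I) + 1)"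

definition degree_quot :: "('n::finite, 'k::field) mpoly set \<Rightarrow> real" where
  "degree_quot I = (if hilbert_poly I = 0 then real (\<Sum>d | hilbert_fun I d \<noteq> 0. hilbert_fun I d)
     else lead_coeff (hilbert_poly I) * fact (degree (hilbert_poly I)))"

definition is_lattice :: "('n::finite \<Rightarrow> int) set \<Rightarrow> bool" where
  "is_lattice L \<longleftrightarrow> (\<lambda>_. 0) \<in> L \<and> (\<forall>a\<in>L. \<forall>b\<in>L. (\<lambda>i. a i + b i) \<in> L) \<and> (\<forall>a\<in>L. (\<lambda>i. - a i) \<in> L)"

definition pos_part :: "('n::finite \<Rightarrow> int) \<Rightarrow> ('n \<Rightarrow>\<^sub>0 nat)" where
  "pos_part a = Abs_poly_mapping (\<lambda>i. nat (a i))"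

definition neg_part :: "('n::finite \<Rightarrow> int) \<Rightarrow> ('n \<Rightarrow>\<^sub>0 nat)" where
  "neg_part a = Abs_poly_mapping (\<lambda>i. nat (- a i))"

definition lattice_ideal :: "('n::finite \<Rightarrow> int) set \<Rightarrow> ('n, 'k::field) mpoly set" where
  "lattice_ideal L = ideal_gen {tmon (pos_part a) - tmon (neg_part a) | a. a \<in> L}"

definition torsion_quot :: "('n::finite \<Rightarrow> int) set \<Rightarrow> ('n \<Rightarrow> int) set set" where
  "torsion_quot L = (\<lambda>x. {y. (\<lambda>i. y i - x i) \<in> L}) ` {x. \<exists>p::int. p > 0 \<and> (\<lambda>i. p * x i) \<in> L}"

end

theory Submission
  imports Defs
begin

abbreviation lookup where "lookup \<equiv> Poly_Mapping.lookup"
abbreviation keys where "keys \<equiv> Poly_Mapping.keys"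
abbreviation single where "single \<equiv> Poly_Mapping.single"

section \<open>Ideals\<close>

definition is_ideal :: "('n::finite, 'k::field) mpoly set \<Rightarrow> bool" where
  "is_ideal J \<longleftrightarrow> 0 \<in> J \<and> (\<forall>a\<in>J. \<forall>b\<in>J. a + b \<in> J) \<and> (\<forall>a\<in>J. \<forall>r. r * a \<in> J)"

lemma ideal_gen_least: "is_ideal J \<Longrightarrow> G \<subseteq> J \<Longrightarrow> ideal_gen G \<subseteq> J"
  unfolding ideal_gen_def is_ideal_def by blast

lemma ideal_gen_ideal: "is_ideal (ideal_gen G)"
  unfolding ideal_gen_def is_ideal_def by blast

lemma ideal_gen_base: "G \<subseteq> ideal_gen G"
  unfolding ideal_gen_def by blast

lemma is_idealD:
  assumes "is_ideal J"
  shows "0 \<in> J" "a \<in> J \<Longrightarrow> b \<in> J \<Longrightarrow> a + b \<in> J" "a \<in> J \<Longrightarrow> r * a \<in> J"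
  using assms unfolding is_ideal_def by auto

lemma is_ideal_sum:
  assumes "is_ideal J" "\<And>x. x \<in> A \<Longrightarrow> f x \<in> J"
  shows "sum f A \<in> J"
  using assms(2)
proof (induction A rule: infinite_finite_induct)
  case (infinite A) then show ?case using is_idealD(1)[OF assms(1)] by simp
next
  case empty then show ?case using is_idealD(1)[OF assms(1)] by simp
next
  case (insert x F) then show ?case using is_idealD(2)[OF assms(1)] by simp
qed

lemma mono_decomp: "(\<Sum>v\<in>keys p. single v (lookup p v)) = p"
proof (rule poly_mapping_eqI)
  fix k
  show "lookup (\<Sum>v\<in>keys p. single v (lookup p v)) k = lookup p k"
    by (cases "k \<in> keys p") (auto simp: lookup_sum lookup_single when_def in_keys_iff)
qed

section \<open>Class sums\<close>

definition csum :: "(('n \<Rightarrow>\<^sub>0 nat) \<Rightarrow> ('n \<Rightarrow>\<^sub>0 nat) \<Rightarrow> bool) \<Rightarrow> ('n::finite, 'k::field) mpoly \<Rightarrow> ('n \<Rightarrow>\<^sub>0 nat) \<Rightarrow> 'k" where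
  "csum R p m0 = (\<Sum>m | m \<in> keys p \<and> R m m0. lookup p m)"

definition Vid :: "(('n \<Rightarrow>\<^sub>0 nat) \<Rightarrow> ('n \<Rightarrow>\<^sub>0 nat) \<Rightarrow> bool) \<Rightarrow> ('n::finite, 'k::field) mpoly set" where
  "Vid R = {p. \<forall>m0. csum R p m0 = 0}"

lemma csum_superset:
  assumes "finite S" "keys p \<subseteq> S"
  shows "csum R p m0 = (\<Sum>m\<in>S. if R m m0 then lookup p m else 0)"
proof -
  have "csum R p m0 = (\<Sum>m\<in>{m \<in> S. R m m0}. lookup p m)"
    unfolding csum_def
    by (rule sum.mono_neutral_left) (use assms in \<open>auto simp: in_keys_iff\<close>)
  also have "\<dots> = (\<Sum>m\<in>S. if R m m0 then lookup p m else 0)"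
    using assms(1) by (simp add: sum.inter_filter)
  finally show ?thesis .
qed

lemma csum_add: "csum R (p + q) m0 = csum R p m0 + csum R q m0"
proof -
  define S where "S = keys p \<union> keys q \<union> keys (p + q)"
  have f: "finite S" unfolding S_def by simp
  have "csum R (p+q) m0 = (\<Sum>m\<in>S. if R m m0 then lookup (p+q) m else 0)"
    by (rule csum_superset[OF f]) (auto simp: S_def)
  also have "\<dots> = (\<Sum>m\<in>S. if R m m0 then lookup p m else 0) + (\<Sum>m\<in>S. if R m m0 then lookup q m else 0)"
    by (subst sum.distrib[symmetric]) (rule sum.cong, auto simp: lookup_add)
  also have "\<dots> = csum R p m0 + csum R q m0"
    using csum_superset[OF f, of p R m0] csum_superset[OF f, of q R m0] by (simp add: S_def le_supI1 le_supI2)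
  finally show ?thesis .
qed

lemma csum_zero [simp]: "csum R 0 m0 = 0"
  by (simp add: csum_def)

lemma csum_sum: "csum R (sum f A) m0 = (\<Sum>x\<in>A. csum R (f x) m0)"
  by (induction A rule: infinite_finite_induct) (auto simp: csum_add)

lemma csum_single: "csum R (single w c) m0 = (if R w m0 then c else 0)"
proof (cases "c = 0")
  case False
  then have "{m. m \<in> keys (single w c) \<and> R m m0} = (if R w m0 then {w} else {})" by auto
  then show ?thesis using False by (simp add: csum_def)
qed (simp add: csum_def)

lemma single_mult_expand:
  "single u c * (a::('n::finite,'k::field) mpoly) = (\<Sum>v\<in>keys a. single (u+v) (c * lookup a v))"
proof -
  have "single u c * a = single u c * (\<Sum>v\<in>keys a. single v (lookup a v))"
    by (simp add: mono_decomp)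
  also have "\<dots> = (\<Sum>v\<in>keys a. single (u+v) (c * lookup a v))"
    by (simp add: sum_distrib_left mult_single)
  finally show ?thesis .
qed

lemma Vid_ideal:
  assumes eq: "equivp R" and tr: "\<And>a b u. R (u + a) (u + b) \<longleftrightarrow> R a b"
  shows "is_ideal (Vid R :: ('n::finite,'k::field) mpoly set)"
proof -
  have add: "p + q \<in> Vid R" if "p \<in> Vid R" "q \<in> Vid R" for p q :: "('n,'k) mpoly"
    using that by (simp add: Vid_def csum_add)
  have sumc: "sum f A \<in> Vid R" if "\<And>x. x \<in> A \<Longrightarrow> f x \<in> Vid R" for f :: "_ \<Rightarrow> ('n,'k) mpoly" and A :: "'b set"
    using that by (simp add: Vid_def csum_sum)
  have sing: "single u c * a \<in> Vid R" if a: "a \<in> Vid R" for u c and a :: "('n,'k) mpoly"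
  proof -
    have "csum R (single u c * a) m0 = 0" for m0
    proof -
      have e: "csum R (single u c * a) m0 = (\<Sum>v\<in>keys a. if R (u+v) m0 then c * lookup a v else 0)"
        by (simp add: single_mult_expand csum_sum csum_single)
      show ?thesis
      proof (cases "\<exists>v0\<in>keys a. R (u+v0) m0")
        case True
        then obtain v0 where v0: "R (u+v0) m0" by blast
        have "R (u+v) m0 \<longleftrightarrow> R v v0" for v
        proof -
          have "R (u+v) m0 \<longleftrightarrow> R (u+v) (u+v0)"
            using v0 eq by (meson equivp_symp equivp_transp)
          then show ?thesis using tr by simp
        qed
        then have "csum R (single u c * a) m0 = (\<Sum>v\<in>keys a. if R v v0 then c * lookup a v else 0)"
          using e by simp
        also have "\<dots> = c * csum R a v0"
          using csum_superset[of "keys a" a R v0] by (auto simp: sum_distrib_left intro!: sum.cong)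
        finally show ?thesis using a by (simp add: Vid_def)
      next
        case False
        then show ?thesis using e by (auto intro!: sum.neutral)
      qed
    qed
    then show ?thesis by (simp add: Vid_def)
  qed
  have mult: "r * a \<in> Vid R" if "a \<in> Vid R" for r a :: "('n,'k) mpoly"
  proof -
    have "r * a = (\<Sum>u\<in>keys r. single u (lookup r u)) * a"
      by (simp only: mono_decomp)
    also have "\<dots> = (\<Sum>u\<in>keys r. single u (lookup r u) * a)"
      by (rule sum_distrib_right)
    finally have "r * a = (\<Sum>u\<in>keys r. single u (lookup r u) * a)" .
    then show ?thesis by (simp only:) (intro sumc sing that)
  qed
  show ?thesis unfolding is_ideal_def using add mult by (auto simp: Vid_def)
qed

lemma lookup_kscale: "lookup (kscale c p) k = c * lookup p k"
  unfolding kscale_def by transfer (simp add: when_def)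

lemma kscale_eq: "kscale c p = single 0 c * p"
  unfolding kscale_def using mult_map_scale_conv_mult[of c p] by simp

interpretation K: vector_space "kscale :: 'k::field \<Rightarrow> ('n::finite,'k) mpoly \<Rightarrow> _"
  by unfold_locales (auto simp: kscale_eq algebra_simps single_add mult_single)

lemma kdim_eq: "kdim V = K.dim V"
  by (simp add: kdim_def)

lemma single_kscale: "single v c = kscale c (tmon v)"
  by (simp add: kscale_eq tmon_def mult_single)

lemma tri_indep:
  fixes f :: "'a \<Rightarrow> ('n::finite,'k::field) mpoly"
  assumes one: "\<And>a. a \<in> A \<Longrightarrow> lookup (f a) (k a) = 1"
    and zero: "\<And>a b. a \<in> A \<Longrightarrow> b \<in> A \<Longrightarrow> a \<noteq> b \<Longrightarrow> lookup (f b) (k a) = 0"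
  shows "inj_on f A" "K.independent (f ` A)"
proof -
  show inj: "inj_on f A"
  proof (rule inj_onI)
    fix a b assume "a \<in> A" "b \<in> A" "f a = f b"
    then show "a = b" using one[of a] zero[of a b] by (cases "a = b") auto
  qed
  show "K.independent (f ` A)"
    unfolding K.independent_explicit_module
  proof (intro allI impI)
    fix t u v
    assume t: "finite t" "t \<subseteq> f ` A" and s: "(\<Sum>v\<in>t. kscale (u v) v) = 0" and v: "v \<in> t"
    obtain a where a: "a \<in> A" "v = f a" using t v by blast
    have "0 = lookup (\<Sum>w\<in>t. kscale (u w) w) (k a)" using s by simp
    also have "\<dots> = (\<Sum>w\<in>t. u w * lookup w (k a))" by (simp add: lookup_sum lookup_kscale)
    also have "\<dots> = u v * lookup v (k a)"
    proof (rule sum.remove[OF t(1) v, THEN trans], simp, rule sum.neutral, intro ballI)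
      fix w assume "w \<in> t - {v}"
      then obtain b where "b \<in> A" "w = f b" "b \<noteq> a" using t a by auto
      then show "u w * lookup w (k a) = 0" using zero[OF a(1)] by simp
    qed
    also have "\<dots> = u v" using one a by simp
    finally show "u v = 0" by simp
  qed
qed

section \<open>Lattice facts\<close>

definition vec :: "('n::finite \<Rightarrow>\<^sub>0 nat) \<Rightarrow> ('n \<Rightarrow> int)" where
  "vec m = (\<lambda>i. int (lookup m i))"

definition lrel :: "('n::finite \<Rightarrow> int) set \<Rightarrow> ('n \<Rightarrow>\<^sub>0 nat) \<Rightarrow> ('n \<Rightarrow>\<^sub>0 nat) \<Rightarrow> bool" where
  "lrel L m m' \<longleftrightarrow> (\<lambda>i. vec m i - vec m' i) \<in> L"

definition wrel :: "('n::finite \<Rightarrow> int) set \<Rightarrow> ('n \<Rightarrow>\<^sub>0 nat) \<Rightarrow> ('n \<Rightarrow>\<^sub>0 nat) \<Rightarrow> bool" where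
  "wrel L m m' \<longleftrightarrow> lrel L m m' \<and> mdeg m = mdeg m'"

context
  fixes L :: "('n::finite \<Rightarrow> int) set"
  assumes lat: "is_lattice L"
begin

lemma lat_zero: "(\<lambda>_. 0) \<in> L" using lat by (simp add: is_lattice_def)
lemma lat_add: "a \<in> L \<Longrightarrow> b \<in> L \<Longrightarrow> (\<lambda>i. a i + b i) \<in> L" using lat by (simp add: is_lattice_def)
lemma lat_neg: "a \<in> L \<Longrightarrow> (\<lambda>i. - a i) \<in> L" using lat by (simp add: is_lattice_def)
lemma lat_diff: "a \<in> L \<Longrightarrow> b \<in> L \<Longrightarrow> (\<lambda>i. a i - b i) \<in> L"
  using lat_add[of a "\<lambda>i. - b i"] lat_neg[of b] by simp

lemma lat_sum: "(\<And>j. j \<in> A \<Longrightarrow> f j \<in> L) \<Longrightarrow> (\<lambda>i. \<Sum>j\<in>A. f j i) \<in> L"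
proof (induction A rule: infinite_finite_induct)
  case (infinite A) then show ?case using lat_zero by simp
next
  case empty then show ?case using lat_zero by simp
next
  case (insert x F) then show ?case using lat_add[of "f x" "\<lambda>i. \<Sum>j\<in>F. f j i"] by simp
qed

lemma lat_nat_mult: "a \<in> L \<Longrightarrow> (\<lambda>i. int k * a i) \<in> L"
proof (induction k)
  case 0 then show ?case using lat_zero by simp
next
  case (Suc k) then show ?case using lat_add[of a "\<lambda>i. int k * a i"] by (simp add: algebra_simps)
qed

lemma lat_int_mult: "a \<in> L \<Longrightarrow> (\<lambda>i. k * a i) \<in> L"
proof (cases "k \<ge> 0")
  case True
  then show "a \<in> L \<Longrightarrow> ?thesis" using lat_nat_mult[of a "nat k"] by simp
next
  case False
  assume a: "a \<in> L"
  have "(\<lambda>i. - (int (nat (-k)) * a i)) \<in> L" using lat_neg lat_nat_mult[OF a, of "nat (-k)"] by blast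
  then show ?thesis using False by simp
qed

lemma lrel_equivp: "equivp (lrel L)"
proof (rule equivpI)
  show "reflp (lrel L)" by (rule reflpI) (simp add: lrel_def lat_zero)
  show "symp (lrel L)" by (rule sympI) (auto simp: lrel_def dest: lat_neg)
  show "transp (lrel L)"
  proof (rule transpI)
    fix x y z assume "lrel L x y" "lrel L y z"
    then show "lrel L x z" unfolding lrel_def using lat_add by fastforce
  qed
qed

lemma lrel_refl: "lrel L m m" using lrel_equivp by (meson equivp_reflp)
lemma lrel_sym: "lrel L m m' \<Longrightarrow> lrel L m' m" using lrel_equivp by (meson equivp_symp)
lemma lrel_trans: "lrel L m m' \<Longrightarrow> lrel L m' m'' \<Longrightarrow> lrel L m m''" using lrel_equivp by (meson equivp_transp)

lemma lrel_transl: "lrel L (u + a) (u + b) \<longleftrightarrow> lrel L a b"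
  by (simp add: lrel_def vec_def lookup_add)

lemma wrel_equivp: "equivp (wrel L)"
proof (rule equivpI)
  show "reflp (wrel L)" by (rule reflpI) (simp add: wrel_def lrel_refl)
  show "symp (wrel L)" by (rule sympI) (auto simp: wrel_def intro: lrel_sym)
  show "transp (wrel L)" by (rule transpI) (auto simp: wrel_def intro: lrel_trans)
qed

lemma mdeg_add: "mdeg (a + b) = mdeg a + mdeg b"
  by (simp add: mdeg_def lookup_add sum.distrib)

lemma wrel_transl: "wrel L (u + a) (u + b) \<longleftrightarrow> wrel L a b"
  by (simp add: wrel_def lrel_transl mdeg_add)

end

lemma lookup_pos_part: "lookup (pos_part (a::'n::finite \<Rightarrow> int)) i = nat (a i)"
  unfolding pos_part_def by (subst lookup_Abs_poly_mapping) auto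
lemma lookup_neg_part: "lookup (neg_part (a::'n::finite \<Rightarrow> int)) i = nat (- a i)"
  unfolding neg_part_def by (subst lookup_Abs_poly_mapping) auto

lemma vec_pos_neg: "(\<lambda>i. vec (pos_part a) i - vec (neg_part a) i) = a"
  by (rule ext) (simp add: vec_def lookup_pos_part lookup_neg_part)

lemma csum_diff: "csum R (p - q) m0 = csum R p m0 - csum R q m0"
  using csum_add[of R "p - q" q m0] by simp

lemma lattice_ideal_Vid:
  assumes lat: "is_lattice L"
  shows "lattice_ideal L \<subseteq> (Vid (lrel L) :: ('n::finite,'k::field) mpoly set)"
  unfolding lattice_ideal_def
proof (rule ideal_gen_least)
  show "is_ideal (Vid (lrel L) :: ('n,'k) mpoly set)"
    by (rule Vid_ideal[OF lrel_equivp[OF lat]]) (simp add: lrel_transl[OF lat])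
  show "{tmon (pos_part a) - tmon (neg_part a) |a. a \<in> L} \<subseteq> (Vid (lrel L) :: ('n,'k) mpoly set)"
  proof safe
    fix a assume a: "a \<in> L"
    have r: "lrel L (pos_part a) (neg_part a)" using a by (simp add: lrel_def vec_pos_neg)
    show "(tmon (pos_part a) - tmon (neg_part a) :: ('n,'k) mpoly) \<in> Vid (lrel L)"
    proof -
      have "lrel L (pos_part a) m0 \<longleftrightarrow> lrel L (neg_part a) m0" for m0
        using r lrel_trans[OF lat] lrel_sym[OF lat] by blast
      then show ?thesis unfolding Vid_def by (simp add: csum_diff tmon_def csum_single)
    qed
  qed
qed

lemma int_mdeg: "int (mdeg m) = (\<Sum>i\<in>UNIV. vec m i)"
  by (simp add: mdeg_def vec_def)

lemma graded_hyper:
  assumes lat: "is_lattice L"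
    and gr: "graded_ideal (lattice_ideal L :: ('n::finite,'k::field) mpoly set)"
    and a: "a \<in> L"
  shows "sum a UNIV = 0"
proof (rule ccontr)
  assume ne: "sum a UNIV \<noteq> 0"
  obtain G where hg: "\<forall>g\<in>G. \<exists>d. g \<in> homog_part d"
    and IG: "(lattice_ideal L :: ('n,'k) mpoly set) = ideal_gen G"
    using gr unfolding graded_ideal_def by blast
  have GV: "G \<subseteq> (Vid (wrel L) :: ('n,'k) mpoly set)"
  proof
    fix g :: "('n,'k) mpoly" assume g: "g \<in> G"
    then obtain d where d: "g \<in> homog_part d" using hg by blast
    have gl: "g \<in> Vid (lrel L)"
      using g ideal_gen_base[of G] IG lattice_ideal_Vid[OF lat] by blast
    have "csum (wrel L) g m0 = 0" for m0
    proof (cases "mdeg m0 = d")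
      case True
      have "{m. m \<in> keys g \<and> wrel L m m0} = {m. m \<in> keys g \<and> lrel L m m0}"
        using d True by (auto simp: wrel_def homog_part_def)
      then show ?thesis using gl by (simp add: csum_def Vid_def)
    next
      case False
      have "{m. m \<in> keys g \<and> wrel L m m0} = {}"
        using d False by (auto simp: wrel_def homog_part_def)
      then show ?thesis unfolding csum_def by (simp only: sum.empty)
    qed
    then show "g \<in> Vid (wrel L)" by (simp add: Vid_def)
  qed
  have IV: "(lattice_ideal L :: ('n,'k) mpoly set) \<subseteq> Vid (wrel L)"
    unfolding IG
    by (rule ideal_gen_least[OF Vid_ideal[OF wrel_equivp[OF lat]] GV]) (simp add: wrel_transl[OF lat])
  have b: "(tmon (pos_part a) - tmon (neg_part a) :: ('n,'k) mpoly) \<in> lattice_ideal L"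
    unfolding lattice_ideal_def using a by (intro subsetD[OF ideal_gen_base]) blast
  have "int (mdeg (pos_part a)) - int (mdeg (neg_part a)) = sum a UNIV"
    using vec_pos_neg[of a] by (simp add: int_mdeg sum_subtractf[symmetric] fun_eq_iff)
  then have dne: "mdeg (pos_part a) \<noteq> mdeg (neg_part a)" using ne by auto
  have "csum (wrel L) (tmon (pos_part a) - tmon (neg_part a) :: ('n,'k) mpoly) (pos_part a) = 1"
    using dne by (simp add: csum_diff tmon_def csum_single wrel_def lrel_refl[OF lat])
  then show False using IV b by (auto simp: Vid_def)
qed

definition Mset :: "nat \<Rightarrow> ('n::finite \<Rightarrow>\<^sub>0 nat) set" where
  "Mset d = {m. mdeg m = d}"

lemma finite_Mset: "finite (Mset d :: ('n::finite \<Rightarrow>\<^sub>0 nat) set)"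
proof -
  have "lookup ` (Mset d :: ('n \<Rightarrow>\<^sub>0 nat) set) \<subseteq> {f. \<forall>x. (x \<in> UNIV \<longrightarrow> f x \<in> {..d}) \<and> (x \<notin> UNIV \<longrightarrow> f x = 0)}"
  proof
    fix f assume "f \<in> lookup ` (Mset d :: ('n \<Rightarrow>\<^sub>0 nat) set)"
    then obtain m :: "'n \<Rightarrow>\<^sub>0 nat" where m: "mdeg m = d" "f = lookup m" by (auto simp: Mset_def)
    have "lookup m i \<le> d" for i
      using m(1) member_le_sum[of i UNIV "lookup m"] by (simp add: mdeg_def)
    then show "f \<in> {f. \<forall>x. (x \<in> UNIV \<longrightarrow> f x \<in> {..d}) \<and> (x \<notin> UNIV \<longrightarrow> f x = 0)}" using m by auto
  qed
  then have "finite (lookup ` (Mset d :: ('n \<Rightarrow>\<^sub>0 nat) set))"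
    by (rule finite_subset) (rule finite_set_of_finite_funs; simp)
  then show ?thesis by (rule finite_imageD) (simp add: inj_on_def)
qed

lemma lookup_tmon: "lookup (tmon m :: ('n::finite,'k::field) mpoly) k = (if m = k then 1 else 0)"
  by (simp add: tmon_def lookup_single when_def)

lemma dim_homog: "K.dim (homog_part d :: ('n::finite,'k::field) mpoly set) = card (Mset d :: ('n \<Rightarrow>\<^sub>0 nat) set)"
proof -
  let ?B = "(tmon :: _ \<Rightarrow> ('n,'k) mpoly) ` Mset d"
  have ti: "inj_on (tmon :: _ \<Rightarrow> ('n,'k) mpoly) (Mset d)" "K.independent ?B"
    by (rule tri_indep[where k = id]; simp add: lookup_tmon)+
  have sub: "?B \<subseteq> homog_part d"
    by (auto simp: homog_part_def tmon_def Mset_def)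
  have sp: "homog_part d \<subseteq> K.span ?B"
  proof
    fix p :: "('n,'k) mpoly" assume p: "p \<in> homog_part d"
    have "p = (\<Sum>v\<in>keys p. kscale (lookup p v) (tmon v))"
      by (simp add: mono_decomp single_kscale[symmetric])
    also have "\<dots> \<in> K.span ?B"
      using p by (intro K.span_sum K.span_scale K.span_base) (auto simp: homog_part_def Mset_def)
    finally show "p \<in> K.span ?B" .
  qed
  have "card ?B = K.dim (homog_part d :: ('n,'k) mpoly set)"
    by (rule K.basis_card_eq_dim[OF sub sp ti(2)])
  then show ?thesis using card_image[OF ti(1)] by simp
qed

definition rho :: "('n::finite \<Rightarrow> int) set \<Rightarrow> ('n \<Rightarrow>\<^sub>0 nat) \<Rightarrow> ('n \<Rightarrow>\<^sub>0 nat)" where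
  "rho L m = (SOME x. lrel L x m)"

lemma keys_tmon_diff: "k \<in> keys (tmon m - tmon m' :: ('n::finite,'k::field) mpoly) \<Longrightarrow> k = m \<or> k = m'"
  by (auto simp: in_keys_iff lookup_minus lookup_tmon split: if_splits)

context
  fixes L :: "('n::finite \<Rightarrow> int) set"
  assumes lat: "is_lattice L"
    and hyp: "\<And>a. a \<in> L \<Longrightarrow> sum a UNIV = 0"
begin

lemma lrel_mdeg: "lrel L m m' \<Longrightarrow> mdeg m = mdeg m'"
proof -
  assume "lrel L m m'"
  then have "sum (\<lambda>i. vec m i - vec m' i) UNIV = 0" using hyp by (simp add: lrel_def)
  then have "int (mdeg m) = int (mdeg m')" by (simp add: int_mdeg sum_subtractf)
  then show ?thesis by simp
qed

lemma rho_rel: "lrel L (rho L m) m"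
  unfolding rho_def by (rule someI[of _ m]) (rule lrel_refl[OF lat])

lemma rho_eq: "lrel L m m' \<Longrightarrow> rho L m = rho L m'"
proof -
  assume r: "lrel L m m'"
  have "(\<lambda>x. lrel L x m) = (\<lambda>x. lrel L x m')"
    using r lrel_trans[OF lat] lrel_sym[OF lat] by (intro ext iffI) blast+
  then show ?thesis by (simp add: rho_def)
qed

lemma rho_eq_iff: "rho L m = rho L m' \<longleftrightarrow> lrel L m m'"
proof
  assume "rho L m = rho L m'"
  then have "lrel L (rho L m) m" "lrel L (rho L m) m'" using rho_rel by metis+
  then show "lrel L m m'" using lrel_trans[OF lat] lrel_sym[OF lat] by blast
qed (rule rho_eq)

lemma rho_Mset: "m \<in> Mset d \<Longrightarrow> rho L m \<in> Mset d"
  using lrel_mdeg[OF rho_rel] by (simp add: Mset_def)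

lemma rho_rho: "rho L (rho L m) = rho L m"
  by (rule rho_eq[OF rho_rel])

lemma tmon_diff_in_I:
  assumes r: "lrel L m m'"
  shows "(tmon m - tmon m' :: ('n,'k::field) mpoly) \<in> lattice_ideal L"
proof -
  define a where "a = (\<lambda>i. vec m i - vec m' i)"
  have aL: "a \<in> L" using r by (simp add: a_def lrel_def)
  define g :: "'n \<Rightarrow>\<^sub>0 nat" where "g = Abs_poly_mapping (\<lambda>i. min (lookup m i) (lookup m' i))"
  have lg: "lookup g i = min (lookup m i) (lookup m' i)" for i
    unfolding g_def by (subst lookup_Abs_poly_mapping) auto
  have e1: "g + pos_part a = m"
    by (rule poly_mapping_eqI) (simp add: lookup_add lg lookup_pos_part a_def vec_def)
  have e2: "g + neg_part a = m'"
    by (rule poly_mapping_eqI) (simp add: lookup_add lg lookup_neg_part a_def vec_def)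
  have "(tmon m - tmon m' :: ('n,'k) mpoly) = tmon g * (tmon (pos_part a) - tmon (neg_part a))"
    by (simp add: right_diff_distrib tmon_def mult_single flip: e1 e2)
  also have "\<dots> \<in> lattice_ideal L"
  proof (rule is_idealD(3)[OF ideal_gen_ideal[of "{tmon (pos_part a) - tmon (neg_part a) |a. a \<in> L}"], folded lattice_ideal_def])
    show "(tmon (pos_part a) - tmon (neg_part a) :: ('n,'k) mpoly) \<in> lattice_ideal L"
      unfolding lattice_ideal_def using aL by (intro subsetD[OF ideal_gen_base]) blast
  qed
  finally show ?thesis .
qed

lemma dim_I_homog:
  "K.dim (lattice_ideal L \<inter> homog_part d :: ('n,'k::field) mpoly set)
     = card (Mset d - rho L ` Mset d)"
proof -
  let ?A = "Mset d - rho L ` Mset d"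
  define b :: "_ \<Rightarrow> ('n,'k) mpoly" where "b m = tmon m - tmon (rho L m)" for m
  have nrep: "rho L a \<noteq> a" if "a \<in> ?A" for a using that by (metis DiffD1 DiffD2 image_eqI)
  have repA: "rho L x \<notin> ?A" for x
    by (metis Diff_iff image_eqI rho_rho rho_Mset Mset_def mem_Collect_eq lrel_mdeg rho_rel)
  have h1: "lookup (b a) (id a) = 1" if "a \<in> ?A" for a
    using nrep[OF that] by (simp add: b_def lookup_minus lookup_tmon)
  have h2: "lookup (b c) (id a) = 0" if "a \<in> ?A" "c \<in> ?A" "a \<noteq> c" for a c
    using that repA[of c] by (auto simp add: b_def lookup_minus lookup_tmon)
  note ti = tri_indep[of ?A b id, OF h1 h2]
  have sub: "b ` ?A \<subseteq> lattice_ideal L \<inter> homog_part d"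
  proof safe
    fix m assume m: "m \<in> Mset d" "m \<notin> rho L ` Mset d"
    show "b m \<in> lattice_ideal L" unfolding b_def
      by (rule tmon_diff_in_I[OF lrel_sym[OF lat, OF rho_rel]])
    show "b m \<in> homog_part d"
      using m rho_Mset[OF m(1)] by (auto simp: homog_part_def b_def Mset_def dest!: keys_tmon_diff)
  qed
  have sp: "lattice_ideal L \<inter> homog_part d \<subseteq> K.span (b ` ?A)"
  proof
    fix p :: "('n,'k) mpoly" assume p: "p \<in> lattice_ideal L \<inter> homog_part d"
    have kp: "keys p \<subseteq> Mset d" using p by (auto simp: homog_part_def Mset_def)
    have pV: "p \<in> Vid (lrel L)" using p lattice_ideal_Vid[OF lat] by blast
    have Z: "(\<Sum>v\<in>keys p. single (rho L v) (lookup p v)) = 0"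
    proof (rule poly_mapping_eqI)
      fix k
      have "lookup (\<Sum>v\<in>keys p. single (rho L v) (lookup p v)) k = (\<Sum>v\<in>keys p. if rho L v = k then lookup p v else 0)"
        by (simp add: lookup_sum lookup_single when_def eq_commute)
      also have "\<dots> = 0"
      proof (cases "\<exists>v0\<in>keys p. rho L v0 = k")
        case True
        then obtain v0 where v0: "v0 \<in> keys p" "rho L v0 = k" by blast
        have "(\<Sum>v\<in>keys p. if rho L v = k then lookup p v else 0) = (\<Sum>v\<in>keys p. if lrel L v v0 then lookup p v else 0)"
          using v0(2) rho_eq_iff by (intro sum.cong) auto
        also have "\<dots> = csum (lrel L) p v0" by (rule csum_superset[symmetric]) auto
        also have "\<dots> = 0" using pV by (simp add: Vid_def)
        finally show ?thesis .
      next
        case False then show ?thesis by (auto intro!: sum.neutral)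
      qed
      finally show "lookup (\<Sum>v\<in>keys p. single (rho L v) (lookup p v)) k = lookup 0 k" by simp
    qed
    have "p = (\<Sum>v\<in>keys p. single v (lookup p v)) - (\<Sum>v\<in>keys p. single (rho L v) (lookup p v))"
      by (simp add: mono_decomp Z)
    also have "\<dots> = (\<Sum>v\<in>keys p. kscale (lookup p v) (b v))"
      by (simp add: b_def sum_subtractf[symmetric] single_kscale K.scale_right_diff_distrib)
    also have "\<dots> \<in> K.span (b ` ?A)"
    proof (intro K.span_sum K.span_scale)
      fix v assume v: "v \<in> keys p"
      show "b v \<in> K.span (b ` ?A)"
      proof (cases "rho L v = v")
        case True then show ?thesis by (simp add: b_def K.span_zero)
      next
        case False
        then have "v \<notin> rho L ` Mset d" by (metis imageE rho_rho)
        then show ?thesis using v kp by (intro K.span_base) auto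
      qed
    qed
    finally show "p \<in> K.span (b ` ?A)" .
  qed
  have "card (b ` ?A) = K.dim (lattice_ideal L \<inter> homog_part d :: ('n,'k) mpoly set)"
    by (rule K.basis_card_eq_dim[OF sub sp ti(2)])
  then show ?thesis using card_image[OF ti(1)] by simp
qed

lemma hilbert_fun_eq:
  "hilbert_fun (lattice_ideal L :: ('n,'k::field) mpoly set) d = card (rho L ` Mset d)"
proof -
  have sub: "rho L ` Mset d \<subseteq> Mset d" using rho_Mset by blast
  have "hilbert_fun (lattice_ideal L :: ('n,'k) mpoly set) d = card (Mset d :: ('n \<Rightarrow>\<^sub>0 nat) set) - card (Mset d - rho L ` Mset d)"
    unfolding hilbert_fun_def kdim_eq dim_homog dim_I_homog by simp
  also have "\<dots> = card (rho L ` Mset d)"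
    using card_Diff_subset[OF finite_subset[OF sub finite_Mset] sub] card_mono[OF finite_Mset sub]
    by simp
  finally show ?thesis .
qed

end

definition cosetOf :: "('n::finite \<Rightarrow> int) set \<Rightarrow> ('n \<Rightarrow> int) \<Rightarrow> ('n \<Rightarrow> int) set" where
  "cosetOf L x = {y. (\<lambda>i. y i - x i) \<in> L}"

lemma torsion_quot_alt: "torsion_quot L = cosetOf L ` {x. \<exists>p::int. p > 0 \<and> (\<lambda>i. p * x i) \<in> L}"
  by (simp add: torsion_quot_def cosetOf_def)

lemma card_image_kernel:
  assumes "\<And>x y. x \<in> A \<Longrightarrow> y \<in> A \<Longrightarrow> f x = f y \<longleftrightarrow> g x = g y"
  shows "card (f ` A) = card (g ` A)"
proof -
  define h where "h z = g (inv_into A f z)" for z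
  have hx: "h (f x) = g x" if "x \<in> A" for x
  proof -
    have "inv_into A f (f x) \<in> A" "f (inv_into A f (f x)) = f x"
      using that by (auto intro: inv_into_into f_inv_into_f)
    then show ?thesis using assms that by (simp add: h_def)
  qed
  have "g ` A = h ` f ` A" using hx by (auto simp: image_iff)
  moreover have "inj_on h (f ` A)"
    using hx assms by (auto simp: inj_on_def)
  ultimately show ?thesis by (simp add: card_image)
qed

definition delta :: "'n \<Rightarrow> 'n \<Rightarrow> int" where
  "delta i0 = (\<lambda>i. if i = i0 then 1 else 0)"

definition Hset :: "('n::finite \<Rightarrow> int) set" where
  "Hset = {x. sum x UNIV = 0}"

lemma sum_delta: "sum (delta i0) (UNIV :: 'n::finite set) = 1"
  by (simp add: delta_def)

context
  fixes L :: "('n::finite \<Rightarrow> int) set"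
  assumes lat: "is_lattice L"
    and hyp: "\<And>a. a \<in> L \<Longrightarrow> sum a UNIV = 0"
begin

lemma cosetOf_eq: "cosetOf L a = cosetOf L b \<longleftrightarrow> (\<lambda>i. a i - b i) \<in> L"
proof
  assume e: "cosetOf L a = cosetOf L b"
  have "a \<in> cosetOf L a" by (simp add: cosetOf_def lat_zero[OF lat])
  then have "a \<in> cosetOf L b" using e by simp
  then show "(\<lambda>i. a i - b i) \<in> L" by (simp add: cosetOf_def)
next
  assume ab: "(\<lambda>i. a i - b i) \<in> L"
  show "cosetOf L a = cosetOf L b"
  proof (intro set_eqI iffI)
    fix y assume "y \<in> cosetOf L a"
    then have "(\<lambda>i. y i - a i) \<in> L" by (simp add: cosetOf_def)
    from lat_add[OF lat this ab] have "(\<lambda>i. (y i - a i) + (a i - b i)) \<in> L" by simp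
    then show "y \<in> cosetOf L b" by (simp add: cosetOf_def)
  next
    fix y assume "y \<in> cosetOf L b"
    then have "(\<lambda>i. y i - b i) \<in> L" by (simp add: cosetOf_def)
    from lat_diff[OF lat this ab] have "(\<lambda>i. (y i - b i) - (a i - b i)) \<in> L" by simp
    then show "y \<in> cosetOf L a" by (simp add: cosetOf_def)
  qed
qed

lemma card_rho_coset:
  "card (rho L ` Mset d) = card (cosetOf L ` (\<lambda>m. (\<lambda>i. vec m i - int d * delta i0 i)) ` Mset d)"
proof -
  have "card (rho L ` Mset d) = card ((\<lambda>m. cosetOf L (\<lambda>i. vec m i - int d * delta i0 i)) ` Mset d)"
    by (rule card_image_kernel) (simp add: rho_eq_iff[OF lat hyp] cosetOf_eq lrel_def)
  then show ?thesis by (simp add: image_image)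
qed

lemma shift_in_H: "m \<in> Mset d \<Longrightarrow> (\<lambda>i. vec m i - int d * delta i0 i) \<in> Hset"
  by (simp add: Hset_def sum_subtractf sum_distrib_left[symmetric] sum_delta int_mdeg[symmetric] Mset_def)

lemma card_rho_le: "finite (cosetOf L ` Hset) \<Longrightarrow> card (rho L ` Mset d) \<le> card (cosetOf L ` Hset)"
  unfolding card_rho_coset[of d undefined]
  by (rule card_mono) (auto intro: shift_in_H)

lemma torsion_sub_H: "{x. \<exists>p::int. p > 0 \<and> (\<lambda>i. p * x i) \<in> L} \<subseteq> Hset"
proof safe
  fix x p assume "p > (0::int)" "(\<lambda>i. p * x i) \<in> L"
  then have "p * sum x UNIV = 0" using hyp by (simp add: sum_distrib_left)
  then show "x \<in> Hset" using \<open>p > 0\<close> by (simp add: Hset_def)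
qed

lemma H_torsion:
  assumes fin: "finite (cosetOf L ` Hset)" and x: "x \<in> Hset"
  shows "\<exists>p::int. p > 0 \<and> (\<lambda>i. p * x i) \<in> L"
proof -
  have "(\<lambda>k::nat. cosetOf L (\<lambda>i. int k * x i)) ` UNIV \<subseteq> cosetOf L ` Hset"
    using x by (auto simp: Hset_def sum_distrib_left[symmetric])
  then have "finite ((\<lambda>k::nat. cosetOf L (\<lambda>i. int k * x i)) ` UNIV)"
    using fin finite_subset by blast
  then have "\<not> inj (\<lambda>k::nat. cosetOf L (\<lambda>i. int k * x i))"
    using finite_imageD by blast
  then obtain k1 k2 :: nat where k: "k1 \<noteq> k2" "cosetOf L (\<lambda>i. int k1 * x i) = cosetOf L (\<lambda>i. int k2 * x i)"
    by (auto simp: inj_def)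
  then have "(\<lambda>i. (int k1 - int k2) * x i) \<in> L" by (simp add: cosetOf_eq left_diff_distrib)
  then have "(\<lambda>i. - ((int k1 - int k2) * x i)) \<in> L" "(\<lambda>i. (int k1 - int k2) * x i) \<in> L"
    using lat_neg[OF lat] by auto
  then show ?thesis using k(1)
    by (cases "k1 < k2") (force simp: algebra_simps intro!: exI[of _ "int k2 - int k1"], force intro!: exI[of _ "int k1 - int k2"])
qed

lemma torsion_eq_H: "finite (cosetOf L ` Hset) \<Longrightarrow> torsion_quot L = cosetOf L ` Hset"
  unfolding torsion_quot_alt using torsion_sub_H H_torsion by blast

end

lemma vec_of_nonneg:
  assumes "\<And>i. y i \<ge> 0"
  shows "vec (Abs_poly_mapping (\<lambda>i. nat (y i)) :: 'n::finite \<Rightarrow>\<^sub>0 nat) = y"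
  using assms by (auto simp: vec_def fun_eq_iff)

lemma Mset_of_nonneg:
  assumes "\<And>i. y i \<ge> 0" "sum y UNIV = int d"
  shows "(Abs_poly_mapping (\<lambda>i. nat (y i)) :: 'n::finite \<Rightarrow>\<^sub>0 nat) \<in> Mset d"
proof -
  have "int (mdeg (Abs_poly_mapping (\<lambda>i. nat (y i)) :: 'n \<Rightarrow>\<^sub>0 nat)) = int d"
    unfolding int_mdeg vec_of_nonneg[OF assms(1)] using assms(2) .
  then show ?thesis by (simp add: Mset_def)
qed

context
  fixes L :: "('n::finite \<Rightarrow> int) set"
  assumes lat: "is_lattice L"
    and hyp: "\<And>a. a \<in> L \<Longrightarrow> sum a UNIV = 0"
begin

lemma unbounded:
  assumes inf: "infinite (cosetOf L ` Hset)"
  shows "\<exists>D. \<forall>d\<ge>D. N \<le> card (rho L ` Mset d)"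
proof -
  obtain C where C: "C \<subseteq> cosetOf L ` Hset" "finite C" "card C = N"
    using infinite_arbitrarily_large[OF inf] by blast
  define rep where "rep c = (SOME h. h \<in> Hset \<and> cosetOf L h = c)" for c
  have rep: "rep c \<in> Hset \<and> cosetOf L (rep c) = c" if "c \<in> C" for c
  proof -
    have "\<exists>h. h \<in> Hset \<and> cosetOf L h = c" using that C(1) by blast
    then show ?thesis unfolding rep_def by (rule someI_ex)
  qed
  define F where "F = rep ` C"
  have FH: "F \<subseteq> Hset" and CF: "cosetOf L ` F = C" using rep by (auto simp: F_def image_image)
  have finF: "finite F" using C(2) by (simp add: F_def)
  define B :: int where "B = (\<Sum>h\<in>F. \<Sum>i\<in>UNIV. \<bar>h i\<bar>)"
  have hB: "\<bar>h i\<bar> \<le> B" if "h \<in> F" for h i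
  proof -
    have "\<bar>h i\<bar> \<le> (\<Sum>i\<in>UNIV. \<bar>h i\<bar>)" by (rule member_le_sum) auto
    also have "\<dots> \<le> B" unfolding B_def
      by (rule member_le_sum[of h F "\<lambda>h. \<Sum>i\<in>UNIV. \<bar>h i\<bar>"]) (use that finF in auto)
    finally show ?thesis .
  qed
  have B0: "B \<ge> 0" unfolding B_def by (intro sum_nonneg) auto
  define s where "s = int (card (UNIV :: 'n set))"
  fix i0 :: 'n
  define w where "w i = B - (if i = i0 then s * B else 0)" for i
  show ?thesis
  proof (intro exI allI impI)
    fix d assume d: "nat (s * B) \<le> d"
    define y where "y h i = h i + B + (if i = i0 then int d - s * B else 0)" for h :: "'n \<Rightarrow> int" and i
    have y0: "y h i \<ge> 0" if "h \<in> F" for h i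
      using hB[OF that, of i] d B0 by (auto simp: y_def)
    have ysum: "sum (y h) UNIV = int d" if "h \<in> F" for h
    proof -
      have "sum h UNIV = 0" using FH that by (auto simp: Hset_def)
      then show ?thesis by (simp add: y_def sum.distrib s_def)
    qed
    have sub: "(\<lambda>h i. h i + w i) ` F \<subseteq> (\<lambda>m. (\<lambda>i. vec m i - int d * delta i0 i)) ` Mset d"
    proof
      fix z assume "z \<in> (\<lambda>h i. h i + w i) ` F"
      then obtain h where h: "h \<in> F" "z = (\<lambda>i. h i + w i)" by blast
      let ?m = "Abs_poly_mapping (\<lambda>i. nat (y h i)) :: 'n \<Rightarrow>\<^sub>0 nat"
      have "?m \<in> Mset d" by (rule Mset_of_nonneg) (use y0[OF h(1)] ysum[OF h(1)] in auto)
      moreover have "z = (\<lambda>i. vec ?m i - int d * delta i0 i)"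
      proof -
        have "vec ?m = y h" by (rule vec_of_nonneg) (rule y0[OF h(1)])
        then show ?thesis using h by (simp add: fun_eq_iff y_def w_def delta_def)
      qed
      ultimately show "z \<in> (\<lambda>m. (\<lambda>i. vec m i - int d * delta i0 i)) ` Mset d" by blast
    qed
    have "N = card (cosetOf L ` F)" using CF C(3) by simp
    also have "\<dots> = card ((\<lambda>h. cosetOf L (\<lambda>i. h i + w i)) ` F)"
      by (rule card_image_kernel) (simp add: cosetOf_eq[OF lat hyp])
    also have "\<dots> = card (cosetOf L ` (\<lambda>h i. h i + w i) ` F)" by (simp add: image_image)
    also have "\<dots> \<le> card (cosetOf L ` (\<lambda>m. (\<lambda>i. vec m i - int d * delta i0 i)) ` Mset d)"
      by (rule card_mono) (use sub finite_Mset in \<open>auto intro!: finite_imageI\<close>)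
    also have "\<dots> = card (rho L ` Mset d)" by (rule card_rho_coset[OF lat hyp, symmetric])
    finally show "N \<le> card (rho L ` Mset d)" .
  qed
qed

lemma eventually_card:
  assumes fin: "finite (cosetOf L ` Hset)"
  shows "\<exists>D. \<forall>d\<ge>D. card (rho L ` Mset d) = card (cosetOf L ` Hset)"
proof -
  fix i0 :: 'n
  define Oi where "Oi = UNIV - {i0}"
  have "\<forall>j. \<exists>p::int. p > 0 \<and> (\<lambda>i. p * (delta j i - delta i0 i)) \<in> L"
  proof
    fix j
    have "(\<lambda>i. delta j i - delta i0 i) \<in> Hset" by (simp add: Hset_def sum_subtractf sum_delta)
    from H_torsion[OF lat hyp fin this] show "\<exists>p::int. p > 0 \<and> (\<lambda>i. p * (delta j i - delta i0 i)) \<in> L" .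
  qed
  then obtain p where p: "\<And>j. p j > 0" "\<And>j. (\<lambda>i. p j * (delta j i - delta i0 i)) \<in> L" by metis
  define K where "K = (\<Prod>j\<in>UNIV. p j)"
  have K0: "K > 0" unfolding K_def using p(1) by (intro prod_pos) auto
  have KL: "(\<lambda>i. K * (delta j i - delta i0 i)) \<in> L" for j
  proof -
    have "K = (\<Prod>j'\<in>UNIV - {j}. p j') * p j" unfolding K_def
      by (subst prod.remove[of UNIV j]) (auto simp: mult.commute)
    then show ?thesis using lat_int_mult[OF lat p(2)[of j], of "\<Prod>j'\<in>UNIV - {j}. p j'"]
      by (simp add: mult.assoc)
  qed
  define s where "s = int (card (UNIV :: 'n set))"
  have cardO: "int (card Oi) \<le> s" unfolding Oi_def s_def by (simp add: card_mono)
  show ?thesis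
  proof (intro exI allI impI)
    fix d assume d: "nat (s * K) \<le> d"
    have sK: "s * K \<le> int d" using d by linarith
    have "cosetOf L ` Hset \<subseteq> cosetOf L ` (\<lambda>m. (\<lambda>i. vec m i - int d * delta i0 i)) ` Mset d"
    proof
      fix c assume "c \<in> cosetOf L ` Hset"
      then obtain h where h: "h \<in> Hset" "c = cosetOf L h" by blast
      define x where "x i = h i + int d * delta i0 i" for i
      have xsum: "sum x UNIV = int d" using h(1)
        by (simp add: x_def Hset_def sum.distrib sum_distrib_left[symmetric] sum_delta)
      define r where "r j = x j mod K" for j
      have r0: "0 \<le> r j" "r j \<le> K" for j using K0 by (auto simp: r_def intro: less_imp_le)
      define y where "y i = (if i = i0 then int d - (\<Sum>j\<in>Oi. r j) else r i)" for i
      have sumr: "(\<Sum>j\<in>Oi. r j) \<le> s * K"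
      proof -
        have "(\<Sum>j\<in>Oi. r j) \<le> of_nat (card Oi) * K" by (rule sum_bounded_above) (use r0 in auto)
        also have "\<dots> \<le> s * K" using cardO K0 by (intro mult_right_mono) auto
        finally show ?thesis .
      qed
      have y0: "y i \<ge> 0" for i using r0 sumr sK by (auto simp: y_def)
      have sumO: "sum f UNIV = f i0 + sum f Oi" for f :: "'n \<Rightarrow> int"
        unfolding Oi_def by (subst sum.remove[of UNIV i0]) auto
      have ysum: "sum y UNIV = int d"
        unfolding sumO[of y] by (simp add: y_def Oi_def)
      have yx: "(\<lambda>i. y i - x i) = (\<lambda>i. \<Sum>j\<in>Oi. (- (x j div K)) * (K * (delta j i - delta i0 i)))"
      proof
        fix i
        have dm: "x j - r j = K * (x j div K)" for j
          unfolding r_def by (metis add_diff_cancel_right' mult_div_mod_eq)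
        show "y i - x i = (\<Sum>j\<in>Oi. (- (x j div K)) * (K * (delta j i - delta i0 i)))"
        proof (cases "i = i0")
          case True
          have "(\<Sum>j\<in>Oi. (- (x j div K)) * (K * (delta j i - delta i0 i))) = (\<Sum>j\<in>Oi. K * (x j div K))"
            using True by (intro sum.cong) (auto simp: Oi_def delta_def)
          also have "\<dots> = (\<Sum>j\<in>Oi. x j) - (\<Sum>j\<in>Oi. r j)" by (simp add: dm[symmetric] sum_subtractf)
          also have "\<dots> = y i - x i"
            using True xsum sumO[of x] by (simp add: y_def)
          finally show ?thesis by simp
        next
          case False
          have "(\<Sum>j\<in>Oi. (- (x j div K)) * (K * (delta j i - delta i0 i))) = (\<Sum>j\<in>Oi. if j = i then - (x j div K) * K else 0)"
            using False by (intro sum.cong) (auto simp: delta_def)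
          also have "\<dots> = - (x i div K) * K" using False by (simp add: Oi_def)
          also have "\<dots> = y i - x i" using False dm[of i] by (simp add: y_def algebra_simps)
          finally show ?thesis by simp
        qed
      qed
      have yxL: "(\<lambda>i. y i - x i) \<in> L"
        unfolding yx by (intro lat_sum[OF lat] lat_int_mult[OF lat] KL)
      let ?m = "Abs_poly_mapping (\<lambda>i. nat (y i)) :: 'n \<Rightarrow>\<^sub>0 nat"
      have mM: "?m \<in> Mset d" by (rule Mset_of_nonneg) (use y0 ysum in auto)
      have vm: "vec ?m = y" by (rule vec_of_nonneg) (rule y0)
      have "cosetOf L (\<lambda>i. vec ?m i - int d * delta i0 i) = cosetOf L h"
      proof -
        have "(\<lambda>i. (y i - int d * delta i0 i) - h i) = (\<lambda>i. y i - x i)" by (simp add: x_def fun_eq_iff)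
        then show ?thesis using yxL by (simp add: cosetOf_eq[OF lat hyp] vm)
      qed
      then show "c \<in> cosetOf L ` (\<lambda>m. (\<lambda>i. vec m i - int d * delta i0 i)) ` Mset d"
        using mM h(2) by blast
    qed
    moreover have "cosetOf L ` (\<lambda>m. (\<lambda>i. vec m i - int d * delta i0 i)) ` Mset d \<subseteq> cosetOf L ` Hset"
      by (auto intro: shift_in_H[OF lat hyp])
    ultimately have "cosetOf L ` (\<lambda>m. (\<lambda>i. vec m i - int d * delta i0 i)) ` Mset d = cosetOf L ` Hset"
      by blast
    then show "card (rho L ` Mset d) = card (cosetOf L ` Hset)"
      using card_rho_coset[OF lat hyp, of d i0] by simp
  qed
qed

end

definition encn :: "'n::finite \<Rightarrow> nat" where
  "encn = (SOME f. inj f)"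

lemma inj_encn: "inj (encn :: 'n::finite \<Rightarrow> nat)"
proof -
  obtain f :: "'n \<Rightarrow> nat" and n where "f ` UNIV = {i. i < n}" "inj_on f UNIV"
    using finite_imp_inj_to_nat_seg[of "UNIV :: 'n set"] by auto
  then have "\<exists>f :: 'n \<Rightarrow> nat. inj f" by blast
  then show ?thesis unfolding encn_def by (rule someI_ex)
qed

definition lexless :: "('n::finite \<Rightarrow>\<^sub>0 nat) \<Rightarrow> ('n \<Rightarrow>\<^sub>0 nat) \<Rightarrow> bool" where
  "lexless x y \<longleftrightarrow> (\<exists>i. lookup x i < lookup y i \<and> (\<forall>j. encn j < encn i \<longrightarrow> lookup x j = lookup y j))"

lemma lexless_irrefl: "\<not> lexless x x"
  by (simp add: lexless_def)

lemma lexless_trans: "lexless x y \<Longrightarrow> lexless y z \<Longrightarrow> lexless x z"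
proof -
  assume "lexless x y" "lexless y z"
  then obtain i i' where i: "lookup x i < lookup y i" "\<forall>j. encn j < encn i \<longrightarrow> lookup x j = lookup y j"
    and i': "lookup y i' < lookup z i'" "\<forall>j. encn j < encn i' \<longrightarrow> lookup y j = lookup z j"
    unfolding lexless_def by blast
  consider "encn i < encn i'" | "encn i' < encn i" | "i = i'"
    using inj_encn by (metis injD linorder_neqE_nat)
  then show "lexless x z"
  proof cases
    case 1 then show ?thesis unfolding lexless_def using i i'
      by (intro exI[of _ i]) (metis order.strict_trans)
  next
    case 2 then show ?thesis unfolding lexless_def using i i'
      by (intro exI[of _ i']) (metis order.strict_trans)
  next
    case 3 then show ?thesis unfolding lexless_def using i i'
      by (intro exI[of _ i]) auto
  qed
qed

lemma lexless_total: "x \<noteq> y \<Longrightarrow> lexless x y \<or> lexless y x"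
proof -
  assume "x \<noteq> y"
  then obtain k where "lookup x k \<noteq> lookup y k" by (meson poly_mapping_eqI)
  then obtain i where i: "lookup x i \<noteq> lookup y i"
    and min: "\<And>j. lookup x j \<noteq> lookup y j \<Longrightarrow> encn i \<le> encn j"
    using ex_has_least_nat[of "\<lambda>i. lookup x i \<noteq> lookup y i" k encn] by blast
  have "\<forall>j. encn j < encn i \<longrightarrow> lookup x j = lookup y j" using min by (meson not_le)
  then show ?thesis using i unfolding lexless_def
    by (metis linorder_neqE_nat)
qed

lemma lexless_add: "lexless (x + u) (y + u) \<longleftrightarrow> lexless x y"
  by (simp add: lexless_def lookup_add)

lemma lex_min_exists:
  assumes "finite A" "A \<noteq> {}"
  shows "\<exists>x\<in>A. \<forall>y\<in>A. \<not> lexless y x"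
  using assms
proof (induction A rule: finite_ne_induct)
  case (singleton x) then show ?case by (simp add: lexless_irrefl)
next
  case (insert x F)
  then obtain z where z: "z \<in> F" "\<forall>y\<in>F. \<not> lexless y z" by blast
  show ?case
  proof (cases "lexless x z")
    case True
    then show ?thesis using z lexless_trans lexless_irrefl by blast
  next
    case False
    then show ?thesis using z by blast
  qed
qed

definition Uset :: "('n::finite \<Rightarrow> int) set \<Rightarrow> ('n \<Rightarrow>\<^sub>0 nat) set" where
  "Uset L = {m. \<exists>m'. lrel L m' m \<and> lexless m' m}"

lemma Uset_up: "m \<in> Uset L \<Longrightarrow> m + u \<in> Uset L"
proof -
  assume "m \<in> Uset L"
  then obtain m' where "lrel L m' m" "lexless m' m" by (auto simp: Uset_def)
  then have "lrel L (m' + u) (m + u)" "lexless (m' + u) (m + u)"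
    by (simp_all add: lrel_def vec_def lookup_add lexless_add)
  then show ?thesis by (auto simp: Uset_def)
qed

context
  fixes L :: "('n::finite \<Rightarrow> int) set"
  assumes lat: "is_lattice L"
    and hyp: "\<And>a. a \<in> L \<Longrightarrow> sum a UNIV = 0"
begin

lemma card_rho_R: "card (rho L ` Mset d) = card (Mset d - Uset L)"
proof -
  let ?R = "Mset d - Uset L"
  have img: "rho L ` ?R = rho L ` Mset d"
  proof
    show "rho L ` Mset d \<subseteq> rho L ` ?R"
    proof
      fix c assume "c \<in> rho L ` Mset d"
      then obtain m where m: "m \<in> Mset d" "c = rho L m" by blast
      define C where "C = {m' \<in> Mset d. lrel L m' m}"
      have "finite C" unfolding C_def by (rule finite_subset[OF _ finite_Mset[of d]]) auto
      moreover have "C \<noteq> {}" using m(1) lrel_refl[OF lat] by (auto simp: C_def)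
      ultimately obtain z where z: "z \<in> C" "\<forall>y\<in>C. \<not> lexless y z" using lex_min_exists by blast
      have "z \<notin> Uset L"
      proof
        assume "z \<in> Uset L"
        then obtain m' where m': "lrel L m' z" "lexless m' z" by (auto simp: Uset_def)
        have "lrel L m' m" using m' z(1) lrel_trans[OF lat] by (auto simp: C_def)
        moreover have "m' \<in> Mset d" using lrel_mdeg[OF lat hyp m'(1)] z(1) by (auto simp: C_def Mset_def)
        ultimately show False using z(2) m'(2) by (auto simp: C_def)
      qed
      moreover have "rho L z = c" using z(1) m(2) rho_eq_iff[OF lat hyp] by (auto simp: C_def)
      ultimately show "c \<in> rho L ` ?R" using z(1) by (auto simp: C_def)
    qed
  qed auto
  have "inj_on (rho L) ?R"
  proof (rule inj_onI)
    fix x y assume x: "x \<in> ?R" and y: "y \<in> ?R" and e: "rho L x = rho L y"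
    show "x = y"
    proof (rule ccontr)
      assume "x \<noteq> y"
      then consider "lexless x y" | "lexless y x" using lexless_total by blast
      then show False
      proof cases
        case 1
        have "lrel L x y" using e rho_eq_iff[OF lat hyp] by blast
        then show False using 1 y by (auto simp: Uset_def)
      next
        case 2
        have "lrel L y x" using e rho_eq_iff[OF lat hyp] by metis
        then show False using 2 x by (auto simp: Uset_def)
      qed
    qed
  qed
  then show ?thesis using img card_image by metis
qed

end

definition le_pm :: "('n::finite \<Rightarrow>\<^sub>0 nat) \<Rightarrow> ('n \<Rightarrow>\<^sub>0 nat) \<Rightarrow> bool" where
  "le_pm g m \<longleftrightarrow> (\<forall>i. lookup g i \<le> lookup m i)"

lemma nat_incsub: "\<exists>\<phi>. strict_mono \<phi> \<and> incseq (\<lambda>n. (f::nat \<Rightarrow> nat) (\<phi> n))"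
proof -
  obtain \<phi> where \<phi>: "strict_mono \<phi>" "monoseq (\<lambda>n. f (\<phi> n))" using seq_monosub by blast
  show ?thesis
  proof (cases "incseq (\<lambda>n. f (\<phi> n))")
    case True then show ?thesis using \<phi> by blast
  next
    case False
    then have dec: "decseq (\<lambda>n. f (\<phi> n))" using \<phi>(2) by (simp add: monoseq_iff)
    obtain N where N: "\<forall>y. f (\<phi> N) \<le> f (\<phi> y)"
      using ex_has_least_nat[of "\<lambda>_. True" 0 "\<lambda>n. f (\<phi> n)"] by blast
    have c: "f (\<phi> (n + N)) = f (\<phi> N)" for n
      using N dec by (metis decseqD le_add2 order_antisym)
    have "strict_mono (\<lambda>n. \<phi> (n + N))" using \<phi>(1) by (simp add: strict_mono_def)
    moreover have "incseq (\<lambda>n. f (\<phi> (n + N)))" by (simp add: c incseq_def)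
    ultimately show ?thesis by blast
  qed
qed

lemma multi_incsub:
  fixes s :: "nat \<Rightarrow> ('n::finite \<Rightarrow>\<^sub>0 nat)"
  assumes "finite J"
  shows "\<exists>\<phi>. strict_mono \<phi> \<and> (\<forall>i\<in>J. incseq (\<lambda>n. lookup (s (\<phi> n)) i))"
  using assms
proof (induction J rule: finite_induct)
  case empty
  have "strict_mono (\<lambda>n::nat. n)" by (simp add: strict_mono_def)
  then show ?case by blast
next
  case (insert i J)
  then obtain \<phi> where \<phi>: "strict_mono \<phi>" "\<forall>i\<in>J. incseq (\<lambda>n. lookup (s (\<phi> n)) i)" by blast
  obtain \<psi> where \<psi>: "strict_mono \<psi>" "incseq (\<lambda>n. lookup (s (\<phi> (\<psi> n))) i)"
    using nat_incsub[of "\<lambda>n. lookup (s (\<phi> n)) i"] by blast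
  have "strict_mono (\<lambda>n. \<phi> (\<psi> n))" using \<phi>(1) \<psi>(1) by (simp add: strict_mono_def)
  moreover have "incseq (\<lambda>n. lookup (s (\<phi> (\<psi> n))) j)" if "j \<in> J" for j
  proof -
    have m: "mono \<psi>" using \<psi>(1) strict_mono_mono by blast
    show ?thesis using \<phi>(2) that m by (auto simp: incseq_def mono_def)
  qed
  ultimately show ?case using \<psi>(2) by blast
qed

lemma le_pm_antisym: "le_pm a b \<Longrightarrow> le_pm b a \<Longrightarrow> a = b"
  by (rule poly_mapping_eqI) (simp add: le_pm_def order_antisym)

lemma le_pm_trans: "le_pm a b \<Longrightarrow> le_pm b c \<Longrightarrow> le_pm a c"
  by (auto simp: le_pm_def intro: order_trans)

lemma le_pm_mdeg_less: "le_pm a b \<Longrightarrow> a \<noteq> b \<Longrightarrow> mdeg a < mdeg b"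
proof -
  assume ab: "le_pm a b" "a \<noteq> b"
  then obtain k where k: "lookup a k \<noteq> lookup b k" by (meson poly_mapping_eqI)
  show ?thesis unfolding mdeg_def
  proof (rule sum_strict_mono_ex1)
    show "\<forall>x\<in>UNIV. lookup a x \<le> lookup b x" using ab(1) by (simp add: le_pm_def)
    show "\<exists>x\<in>UNIV. lookup a x < lookup b x" using ab(1) k by (metis UNIV_I le_neq_implies_less le_pm_def)
  qed simp
qed

lemma dickson:
  fixes U :: "('n::finite \<Rightarrow>\<^sub>0 nat) set"
  shows "\<exists>G. finite G \<and> G \<subseteq> U \<and> (\<forall>m\<in>U. \<exists>g\<in>G. le_pm g m)"
proof -
  define G where "G = {g\<in>U. \<forall>m\<in>U. le_pm m g \<longrightarrow> m = g}"
  have fin: "finite G"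
  proof (rule ccontr)
    assume "infinite G"
    then obtain f :: "nat \<Rightarrow> _" where f: "inj f" "range f \<subseteq> G"
      using infinite_countable_subset by blast
    obtain \<phi> where \<phi>: "strict_mono \<phi>" "\<forall>i\<in>UNIV. incseq (\<lambda>n. lookup (f (\<phi> n)) i)"
      using multi_incsub[of UNIV f] by auto
    have "le_pm (f (\<phi> 0)) (f (\<phi> 1))" using \<phi>(2) by (auto simp: le_pm_def incseq_def)
    moreover have "f (\<phi> 0) \<in> U" "f (\<phi> 1) \<in> G" using f(2) by (auto simp: G_def)
    ultimately have "f (\<phi> 0) = f (\<phi> 1)" by (auto simp: G_def)
    then have "\<phi> 0 = \<phi> 1" using f(1) by (simp add: inj_eq)
    then show False using \<phi>(1) by (metis strict_mono_eq zero_neq_one)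
  qed
  have below: "\<exists>g\<in>G. le_pm g m" if "m \<in> U" for m
    using that
  proof (induction "mdeg m" arbitrary: m rule: less_induct)
    case less
    show ?case
    proof (cases "m \<in> G")
      case True then show ?thesis by (auto simp: le_pm_def)
    next
      case False
      then obtain m' where m': "m' \<in> U" "le_pm m' m" "m' \<noteq> m" using less.prems by (auto simp: G_def)
      then have "mdeg m' < mdeg m" by (rule_tac le_pm_mdeg_less) auto
      then obtain g where "g \<in> G" "le_pm g m'" using less.hyps m'(1) by blast
      then show ?thesis using m'(2) le_pm_trans by blast
    qed
  qed
  show ?thesis using fin below by (intro exI[of _ G]) (auto simp: G_def)
qed

lemma card_Mset: "card (Mset n :: ('n::finite \<Rightarrow>\<^sub>0 nat) set) = (n + card (UNIV :: 'n set) - 1) choose n"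
proof -
  let ?s = "card (UNIV :: 'n set)"
  obtain g :: "nat \<Rightarrow> 'n" where g: "bij_betw g {0..<?s} UNIV"
    using ex_bij_betw_nat_finite[of "UNIV :: 'n set"] by auto
  define F where "F m = map (\<lambda>k. lookup m (g k)) [0..<?s]" for m :: "'n \<Rightarrow>\<^sub>0 nat"
  have sumF: "sum_list (F m) = mdeg m" for m
  proof -
    have "sum_list (F m) = (\<Sum>k\<in>{0..<?s}. lookup m (g k))"
      by (simp add: F_def sum_set_upt_conv_sum_list_nat[symmetric])
    also have "\<dots> = (\<Sum>i\<in>UNIV. lookup m i)"
      using sum.reindex_bij_betw[OF g, of "lookup m"] by simp
    finally show ?thesis by (simp add: mdeg_def)
  qed
  have inj: "inj_on F (Mset n)"
  proof (rule inj_onI)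
    fix m m' assume "F m = F m'"
    then have "lookup m (g k) = lookup m' (g k)" if "k < ?s" for k
      using that nth_map_upt[of k ?s 0] unfolding F_def by (metis (no_types, lifting) add_0 diff_zero nth_map_upt)
    moreover have "\<forall>i. \<exists>k<?s. i = g k" using g by (force simp: bij_betw_def image_iff)
    ultimately show "m = m'" by (metis poly_mapping_eqI)
  qed
  have img: "F ` Mset n = {l. length l = ?s \<and> sum_list l = n}"
  proof
    show "F ` Mset n \<subseteq> {l. length l = ?s \<and> sum_list l = n}"
      using sumF by (auto simp: F_def Mset_def)
    show "{l. length l = ?s \<and> sum_list l = n} \<subseteq> F ` Mset n"
    proof
      fix l :: "nat list" assume l: "l \<in> {l. length l = ?s \<and> sum_list l = n}"
      define m :: "'n \<Rightarrow>\<^sub>0 nat" where "m = Abs_poly_mapping (\<lambda>i. l ! (the_inv_into {0..<?s} g i))"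
      have lm: "lookup m i = l ! (the_inv_into {0..<?s} g i)" for i
        unfolding m_def by (subst lookup_Abs_poly_mapping) auto
      have "lookup m (g k) = l ! k" if "k < ?s" for k
        using that g by (simp add: lm the_inv_into_f_f bij_betw_def)
      then have Fm: "F m = l" using l by (auto simp: F_def intro: nth_equalityI)
      then have "m \<in> Mset n" using sumF[of m] l by (simp add: Mset_def)
      then show "l \<in> F ` Mset n" using Fm by blast
    qed
  qed
  have "card (Mset n :: ('n \<Rightarrow>\<^sub>0 nat) set) = card {l. length l = ?s \<and> sum_list l = n}"
    using card_image[OF inj] img by simp
  also have "\<dots> = (n + ?s - 1) choose n" by (rule card_length_sum_list)
  finally show ?thesis .
qed

lemma binom_prod: "real ((n + k) choose k) * fact k = (\<Prod>i\<in>{1..k}. real n + real i)"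
proof (induction k)
  case 0 then show ?case by simp
next
  case (Suc k)
  have e: "real (Suc k) * real (Suc (n + k) choose Suc k) = real (Suc (n + k)) * real ((n + k) choose k)"
  proof -
    have e0: "Suc k * (Suc (n + k) choose Suc k) = Suc (n + k) * ((n + k) choose k)" by (rule Suc_times_binomial)
    have "real (Suc k * (Suc (n + k) choose Suc k)) = real (Suc (n + k) * ((n + k) choose k))"
      by (simp only: e0)
    then show ?thesis unfolding of_nat_mult .
  qed
  have "real ((n + Suc k) choose Suc k) * fact (Suc k) = (real (Suc k) * real (Suc (n + k) choose Suc k)) * fact k"
    by (simp del: binomial_Suc_Suc add: algebra_simps)
  also have "\<dots> = real (Suc (n + k)) * (real ((n + k) choose k) * fact k)" by (simp only: e mult.assoc)
  also have "\<dots> = (\<Prod>i\<in>{1..Suc k}. real n + real i)"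
  proof -
    have p: "(\<Prod>i\<in>{1..Suc k}. real n + real i) = (real n + real (Suc k)) * (\<Prod>i\<in>{1..k}. real n + real i)"
      by (simp add: prod.nat_ivl_Suc')
    show ?thesis unfolding p Suc.IH[symmetric] by simp
  qed
  finally show ?case .
qed

definition Qpoly :: "nat \<Rightarrow> real poly" where
  "Qpoly k = smult (1 / fact k) (\<Prod>i\<in>{1..k}. [:real i, 1:])"

lemma poly_Qpoly: "poly (Qpoly k) (real n) = real ((n + k) choose k)"
proof -
  have "poly (Qpoly k) (real n) = (\<Prod>i\<in>{1..k}. real n + real i) / fact k"
    by (simp add: Qpoly_def poly_prod algebra_simps)
  also have "\<dots> = real ((n + k) choose k)" using binom_prod[of n k] by (simp add: field_simps)
  finally show ?thesis .
qed

lemma card_Mset_poly: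
  "real (card (Mset n :: ('n::finite \<Rightarrow>\<^sub>0 nat) set)) = poly (Qpoly (card (UNIV :: 'n set) - 1)) (real n)"
proof -
  have "0 < card (UNIV :: 'n set)" by (simp add: card_gt_0_iff)
  then have s: "card (UNIV :: 'n set) \<ge> 1" by simp
  have "(n + card (UNIV :: 'n set) - 1) choose n = (n + (card (UNIV :: 'n set) - 1)) choose (card (UNIV :: 'n set) - 1)"
    using binomial_symmetric[of n "n + (card (UNIV :: 'n set) - 1)"] s by simp
  then show ?thesis by (simp add: card_Mset poly_Qpoly)
qed

lemma mdeg_plus: "mdeg (a + b) = mdeg a + mdeg b"
  by (simp add: mdeg_def lookup_add sum.distrib)

lemma mdeg_mono: "le_pm h m \<Longrightarrow> mdeg h \<le> mdeg m"
  unfolding mdeg_def le_pm_def by (intro sum_mono) auto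

lemma card_Mset_up:
  fixes h :: "'n::finite \<Rightarrow>\<^sub>0 nat"
  shows "card (Mset d \<inter> {m. le_pm h m}) = (if mdeg h \<le> d then card (Mset (d - mdeg h) :: ('n::finite \<Rightarrow>\<^sub>0 nat) set) else 0)"
proof (cases "mdeg h \<le> d")
  case True
  have "bij_betw (\<lambda>m'. m' + h) (Mset (d - mdeg h)) (Mset d \<inter> {m. le_pm h m})"
  proof (rule bij_betw_imageI)
    show "inj_on (\<lambda>m'. m' + h) (Mset (d - mdeg h))" by (rule inj_onI) simp
    show "(\<lambda>m'. m' + h) ` Mset (d - mdeg h) = Mset d \<inter> {m. le_pm h m}"
    proof
      show "(\<lambda>m'. m' + h) ` Mset (d - mdeg h) \<subseteq> Mset d \<inter> {m. le_pm h m}"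
        using True by (auto simp: Mset_def mdeg_plus le_pm_def lookup_add)
      show "Mset d \<inter> {m. le_pm h m} \<subseteq> (\<lambda>m'. m' + h) ` Mset (d - mdeg h)"
      proof
        fix m assume m: "m \<in> Mset d \<inter> {m. le_pm h m}"
        have e: "(m - h) + h = m"
          using m by (intro poly_mapping_eqI) (simp add: lookup_add lookup_minus le_pm_def)
        have "mdeg (m - h) + mdeg h = d" using m e mdeg_plus[of "m - h" h] by (simp add: Mset_def)
        then have "m - h \<in> Mset (d - mdeg h)" by (simp add: Mset_def)
        then show "m \<in> (\<lambda>m'. m' + h) ` Mset (d - mdeg h)" using e by (metis image_eqI)
      qed
    qed
  qed
  then have "card (Mset (d - mdeg h) :: ('n \<Rightarrow>\<^sub>0 nat) set) = card (Mset d \<inter> {m. le_pm h m})"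
    by (rule bij_betw_same_card)
  then show ?thesis using True by simp
next
  case False
  then have "Mset d \<inter> {m. le_pm h m} = {}" using mdeg_mono by (fastforce simp: Mset_def)
  then show ?thesis using False by simp
qed

definition supB :: "('n::finite \<Rightarrow>\<^sub>0 nat) set \<Rightarrow> ('n \<Rightarrow>\<^sub>0 nat)" where
  "supB B = Abs_poly_mapping (\<lambda>i. Max ((\<lambda>g. lookup g i) ` B))"

lemma le_supB: "finite B \<Longrightarrow> B \<noteq> {} \<Longrightarrow> le_pm (supB B) m \<longleftrightarrow> (\<forall>g\<in>B. le_pm g m)"
proof -
  assume B: "finite B" "B \<noteq> {}"
  have l: "lookup (supB B) i = Max ((\<lambda>g. lookup g i) ` B)" for i
    unfolding supB_def by (subst lookup_Abs_poly_mapping) auto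
  show ?thesis using B by (auto simp: le_pm_def l)
qed

lemma incl_excl_idx:
  assumes "finite A" "\<And>a. a \<in> A \<Longrightarrow> finite (X a)"
  shows "int (card (\<Union>(X ` A))) = (\<Sum>B | B \<subseteq> A \<and> B \<noteq> {}. (- 1) ^ (card B + 1) * int (card (\<Inter>(X ` B))))"
proof -
  interpret Incl_Excl finite "int o card"
  proof qed (auto simp add: card_Un_disjnt)
  show ?thesis using restricted_indexed[OF assms] by simp
qed

context
  fixes L :: "('n::finite \<Rightarrow> int) set"
  assumes lat: "is_lattice L"
    and hyp: "\<And>a. a \<in> L \<Longrightarrow> sum a UNIV = 0"
begin

lemma poly_exists: "\<exists>P. \<forall>\<^sub>F d in sequentially. poly P (real d) = real (card (rho L ` Mset d))"
proof -
  obtain G where G: "finite G" "G \<subseteq> Uset L" "\<forall>m\<in>Uset L. \<exists>g\<in>G. le_pm g m"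
    using dickson[of "Uset L"] by blast
  define BS where "BS = {B. B \<subseteq> G \<and> B \<noteq> {}}"
  have finBS: "finite BS" using G(1) by (simp add: BS_def)
  define a where "a B = mdeg (supB B :: 'n \<Rightarrow>\<^sub>0 nat)" for B
  define Q where "Q = Qpoly (card (UNIV :: 'n set) - 1)"
  have cM: "real (card (Mset n :: ('n \<Rightarrow>\<^sub>0 nat) set)) = poly Q (real n)" for n
    unfolding Q_def by (rule card_Mset_poly)
  define P where "P = Q - (\<Sum>B\<in>BS. smult ((- 1) ^ (card B + 1)) (pcompose Q [:- real (a B), 1:]))"
  define D where "D = (\<Sum>B\<in>BS. a B)"
  show ?thesis
  proof (rule exI[of _ P], rule eventually_sequentiallyI[of D])
    fix d assume d: "D \<le> d"
    have aD: "a B \<le> d" if "B \<in> BS" for B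
      using member_le_sum[of B BS a, OF that] finBS d by (simp add: D_def)
    define X where "X g = Mset d \<inter> {m. le_pm g m}" for g :: "'n \<Rightarrow>\<^sub>0 nat"
    have UX: "Mset d \<inter> Uset L = \<Union>(X ` G)"
    proof
      show "Mset d \<inter> Uset L \<subseteq> \<Union>(X ` G)" using G(3) by (auto simp: X_def)
      show "\<Union>(X ` G) \<subseteq> Mset d \<inter> Uset L"
      proof
        fix m assume "m \<in> \<Union>(X ` G)"
        then obtain g where g: "g \<in> G" "m \<in> Mset d" "le_pm g m" by (auto simp: X_def)
        have e: "g + (m - g) = m"
          using g(3) by (intro poly_mapping_eqI) (simp add: lookup_add lookup_minus le_pm_def)
        have "g + (m - g) \<in> Uset L" using Uset_up g(1) G(2) by blast
        then show "m \<in> Mset d \<inter> Uset L" using e g(2) by simp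
      qed
    qed
    have finX: "finite (X g)" for g by (simp add: X_def finite_Mset)
    have IX: "\<Inter>(X ` B) = Mset d \<inter> {m. le_pm (supB B) m}" if "B \<in> BS" for B
    proof -
      have "finite B" "B \<noteq> {}" using that G(1) by (auto simp: BS_def intro: finite_subset)
      then show ?thesis by (auto simp: X_def le_supB)
    qed
    have "card (rho L ` Mset d) = card (Mset d - Uset L)" by (rule card_rho_R[OF lat hyp])
    also have "\<dots> = card (Mset d :: ('n \<Rightarrow>\<^sub>0 nat) set) - card (Mset d \<inter> Uset L)"
      by (rule card_Diff_subset_Int) (simp add: finite_Mset)
    finally have c1: "int (card (rho L ` Mset d)) = int (card (Mset d :: ('n \<Rightarrow>\<^sub>0 nat) set)) - int (card (Mset d \<inter> Uset L))"
      by (simp add: card_mono finite_Mset of_nat_diff)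
    have "int (card (Mset d \<inter> Uset L)) = (\<Sum>B\<in>BS. (- 1) ^ (card B + 1) * int (card (\<Inter>(X ` B))))"
      unfolding UX BS_def by (rule incl_excl_idx[OF G(1) finX])
    also have "\<dots> = (\<Sum>B\<in>BS. (- 1) ^ (card B + 1) * int (card (Mset (d - a B) :: ('n \<Rightarrow>\<^sub>0 nat) set)))"
      by (intro sum.cong refl) (simp add: IX card_Mset_up aD[unfolded a_def] a_def)
    finally have c2: "int (card (Mset d \<inter> Uset L)) = (\<Sum>B\<in>BS. (- 1) ^ (card B + 1) * int (card (Mset (d - a B) :: ('n \<Rightarrow>\<^sub>0 nat) set)))" .
    have "real (card (rho L ` Mset d)) = real_of_int (int (card (rho L ` Mset d)))" by simp
    also have "\<dots> = real (card (Mset d :: ('n \<Rightarrow>\<^sub>0 nat) set)) - (\<Sum>B\<in>BS. (- 1) ^ (card B + 1) * real (card (Mset (d - a B) :: ('n \<Rightarrow>\<^sub>0 nat) set)))"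
      unfolding c1 c2 by simp
    also have "\<dots> = poly Q (real d) - (\<Sum>B\<in>BS. (- 1) ^ (card B + 1) * poly Q (real d - real (a B)))"
      by (intro arg_cong2[where f = "(-)"] sum.cong refl) (simp_all add: cM aD of_nat_diff)
    also have "\<dots> = poly P (real d)"
      by (simp add: P_def poly_sum poly_pcompose)
    finally show "poly P (real d) = real (card (rho L ` Mset d))" by simp
  qed
qed

end

lemma poly_eventually_unique:
  fixes p q :: "real poly"
  assumes "\<forall>\<^sub>F d in sequentially. poly p (real d) = f d"
    and "\<forall>\<^sub>F d in sequentially. poly q (real d) = f d"
  shows "p = q"
proof (rule ccontr)
  assume ne: "p \<noteq> q"
  from eventually_conj[OF assms] obtain N where N: "\<And>d. d \<ge> N \<Longrightarrow> poly (p - q) (real d) = 0"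
    unfolding eventually_sequentially by (metis poly_diff eq_iff_diff_eq_0)
  have "real ` {N..} \<subseteq> {x. poly (p - q) x = 0}" using N by auto
  moreover have "infinite (real ` {N..})"
  proof
    assume "finite (real ` {N..})"
    then have "finite {N..}" by (rule finite_imageD) (simp add: inj_on_def)
    then show False using infinite_Ici[of N] by blast
  qed
  ultimately have "infinite {x. poly (p - q) x = 0}" using finite_subset by blast
  then show False using poly_roots_finite[of "p - q"] ne by simp
qed

theorem theorem3p13:
  fixes L :: "('n::finite \<Rightarrow> int) set"
  assumes "card (UNIV :: 'n set) \<ge> 2"
    and "is_lattice L"
    and "graded_ideal (lattice_ideal L :: ('n, 'k::field) mpoly set)"
    and "krull_dim_quot (lattice_ideal L :: ('n, 'k) mpoly set) = 1"
  shows "degree_quot (lattice_ideal L :: ('n, 'k) mpoly set) = real (card (torsion_quot L))"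
proof -
  note lat = assms(2)
  have hyp: "\<And>a. a \<in> L \<Longrightarrow> sum a UNIV = 0"
    using graded_hyper[OF lat assms(3)] by blast
  let ?I = "lattice_ideal L :: ('n, 'k) mpoly set"
  have hf: "hilbert_fun ?I d = card (rho L ` Mset d)" for d
    by (rule hilbert_fun_eq[OF lat hyp])
  obtain P where P: "\<forall>\<^sub>F d in sequentially. poly P (real d) = real (card (rho L ` Mset d))"
    using poly_exists[OF lat hyp] by blast
  have HP: "hilbert_poly ?I = P"
    unfolding hilbert_poly_def
  proof (rule the_equality)
    show "\<forall>\<^sub>F d in sequentially. poly P (real d) = real (hilbert_fun ?I d)" using P by (simp add: hf)
    fix p assume "\<forall>\<^sub>F d in sequentially. poly p (real d) = real (hilbert_fun ?I d)"
    then show "p = P" using P by (intro poly_eventually_unique[where f = "\<lambda>d. real (hilbert_fun ?I d)"]) (simp_all add: hf)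
  qed
  have P0: "P \<noteq> 0" and dP: "degree P = 0"
    using assms(4) unfolding krull_dim_quot_def HP by (auto split: if_splits)
  define c where "c = coeff P 0"
  have polyc: "poly P x = c" for x
  proof -
    have "P = [:c:]" using dP by (simp add: c_def degree_0_id)
    then show ?thesis by (metis poly_pCons mult_zero_right poly_0 add_0_right)
  qed
  have dq: "degree_quot ?I = c"
    unfolding degree_quot_def HP using P0 dP by (simp add: c_def)
  have ev: "\<forall>\<^sub>F d in sequentially. c = real (card (rho L ` Mset d))"
    using P by (simp add: polyc)
  show ?thesis
  proof (cases "finite (cosetOf L ` Hset)")
    case True
    obtain D where D: "\<And>d. d \<ge> D \<Longrightarrow> card (rho L ` Mset d) = card (cosetOf L ` Hset)"
      using eventually_card[OF lat hyp True] by blast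
    obtain N where N: "\<And>d. d \<ge> N \<Longrightarrow> c = real (card (rho L ` Mset d))"
      using ev by (auto simp: eventually_sequentially)
    have "c = real (card (cosetOf L ` Hset))" using D[of "max D N"] N[of "max D N"] by simp
    then show ?thesis using dq torsion_eq_H[OF lat hyp True] by simp
  next
    case False
    obtain D where D: "\<And>d. d \<ge> D \<Longrightarrow> nat \<lceil>c\<rceil> + 1 \<le> card (rho L ` Mset d)"
      using unbounded[OF lat hyp False, of "nat \<lceil>c\<rceil> + 1"] by blast
    obtain N where N: "\<And>d. d \<ge> N \<Longrightarrow> c = real (card (rho L ` Mset d))"
      using ev by (auto simp: eventually_sequentially)
    have "real (nat \<lceil>c\<rceil> + 1) \<le> c" using D[of "max D N"] N[of "max D N"] by simp
    then show ?thesis by linarith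
  qed
qed

end
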